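(* Let $B$ be a nilpotent $n\times n$ matrix with $\mathrm{sh}(B)=(\lambda,\lambda)$ (so $n=2\lambda$). If $\underline{\mu}=(\mu_1,\ldots,\mu_s)\in\mathcal{P}(\mathcal{N}_B)$, then either $\underline{\mu}=(n)$ or $\mu_1\le\lambda+1$.
   Context: $\mathbb{F}$ is an algebraically closed field of characteristic $0$. For a nilpotent matrix $A$, $\mathrm{sh}(A)$ is the partition of $n$ given by the sizes of the Jordan blocks of its Jordan canonical form; $\mathcal{N}_B$ is the set of nilpotent $n\times n$ matrices over $\mathbb{F}$ commuting with $B$ and $\mathcal{P}(\mathcal{N}_B)=\{\mathrm{sh}(A):A\in\mathcal{N}_B\}$. *)

theory Defs
  imports "Jordan_Normal_Form.Jordan_Normal_Form_Uniqueness"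
    "HOL-Computational_Algebra.Polynomial"
    "HOL-Library.Multiset"
begin

definition nilpotent_mat :: "'a :: semiring_1 mat \<Rightarrow> nat \<Rightarrow> bool" where
  "nilpotent_mat A n \<longleftrightarrow> A \<in> carrier_mat n n \<and> (\<exists>k. A ^\<^sub>m k = 0\<^sub>m n n)"

definition sh :: "'a :: field mat \<Rightarrow> nat multiset" where
  "sh A = (THE M. \<exists>n_as. jordan_nf A n_as \<and> M = mset (map fst n_as))"

definition nil_comm :: "'a :: semiring_1 mat \<Rightarrow> nat \<Rightarrow> 'a mat set" where
  "nil_comm B n = {A. nilpotent_mat A n \<and> A * B = B * A}"

definition partitions_of_nil_comm :: "'a :: field mat \<Rightarrow> nat \<Rightarrow> nat multiset set" where
  "partitions_of_nil_comm B n = sh ` nil_comm B n"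

end

theory Submission
  imports Defs "Jordan_Normal_Form.Jordan_Normal_Form_Existence" "Jordan_Normal_Form.DL_Rank"
begin

lemma triangularizable:
  fixes A :: "'a::alg_closed_field mat"
  assumes "A \<in> carrier_mat n n"
  shows "\<exists>B. B \<in> carrier_mat n n \<and> upper_triangular B \<and> similar_mat A B"
  using assms
proof (induction n arbitrary: A)
  case 0
  then show ?case by (intro exI[of _ A], auto simp: upper_triangular_def intro: similar_mat_refl)
next
  case (Suc m A)
  define n where "n = Suc m"
  have A: "A \<in> carrier_mat n n" using Suc.prems n_def by auto
  have "degree (char_poly A) = n" using degree_monic_char_poly[OF A] by auto
  then obtain e where "poly (char_poly A) e = 0" using alg_closed_imp_poly_has_root[of "char_poly A"] n_def by auto
  hence e: "eigenvalue A e" using eigenvalue_root_char_poly[OF A] by auto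
  define v where "v = find_eigenvector A e"
  define b where "b = basis_completion v"
  define W where "W = mat_of_cols n b"
  from find_eigenvector[OF A e] have ev: "eigenvector A v e" unfolding v_def .
  from this[unfolded eigenvector_def]
  have v[simp]: "v \<in> carrier_vec n" and v0: "v \<noteq> 0\<^sub>v n" and eig: "A *\<^sub>v v = e \<cdot>\<^sub>v v" using A by auto
  interpret vec_space "TYPE('a)" n .
  from basis_completion[OF v v0, folded b_def]
  have dist_b: "distinct b" 
    and indep: "\<not> lin_dep (set b)" and bc: "set b \<subseteq> carrier_vec n" and hdb: "hd b = v" 
    and len_b: "length b = n" by auto
  have W: "W \<in> carrier_mat n n" unfolding W_def using len_b by auto
  have colsW: "cols W = b" unfolding W_def using bc len_b by (simp add: cols_mat_of_cols)
  have "rank W = n" using lin_indpt_full_rank[OF W] colsW dist_b indep by auto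
  hence "det W \<noteq> 0" using det_rank_iff[OF W] by auto
  from det_non_zero_imp_unit[OF W this, of undefined]
  obtain W' where W': "W' \<in> carrier_mat n n" and W'W: "W' * W = 1\<^sub>m n" and WW': "W * W' = 1\<^sub>m n"
    unfolding Units_def ring_mat_def by auto
  define A' where "A' = W' * A * W"
  have A'c: "A' \<in> carrier_mat n n" using W W' A unfolding A'_def by auto
  have A'A_wit: "similar_mat_wit A' A W' W"
    by (rule similar_mat_witI[of _ _ n], insert W W' A A'c W'W WW', auto simp: A'_def)
  from similar_mat_wit_sym[OF A'A_wit] have simAA': "similar_mat_wit A A' W W'" by auto
  have n0: "0 < n" using n_def by auto
  have colW0: "col W 0 = v" using colsW hdb len_b n0 W
    by (metis cols_nth carrier_matD(2) hd_conv_nth list.size(3) less_not_refl2)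
  have "col A' 0 = W' *\<^sub>v (A *\<^sub>v col W 0)" unfolding A'_def using W W' A n0
    by (subst col_mult2[of _ n n _ n], auto)
  also have "\<dots> = e \<cdot>\<^sub>v (W' *\<^sub>v col W 0)" unfolding colW0 eig using W' by (simp add: mult_mat_vec)
  also have "W' *\<^sub>v col W 0 = col (W' * W) 0" by (rule col_mult2[OF W' W n0, symmetric])
  also have "\<dots> = unit_vec n 0" unfolding W'W using n0 by simp
  finally have col0: "col A' 0 = e \<cdot>\<^sub>v unit_vec n 0" .
  obtain A1 A2 A0 A3 where splitA': "split_block A' 1 1 = (A1,A2,A0,A3)"
    by (cases "split_block A' 1 1", auto)
  from A'c n_def have "dim_row A' = 1 + m" "dim_col A' = 1 + m" by auto
  from split_block[OF splitA' this] have A1: "A1 \<in> carrier_mat 1 1" and A2: "A2 \<in> carrier_mat 1 m"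
    and A3: "A3 \<in> carrier_mat m m" 
    and A'block: "A' = four_block_mat A1 A2 A0 A3" by auto
  {
    fix i
    assume "i < m"
    with arg_cong[OF col0, of "\<lambda> v. v $ Suc i"] A'c n_def
    have "A' $$ (Suc i, 0) = 0" by auto
  } note A'0 = this
  have A0id: "A0 = 0\<^sub>m m 1"
    using splitA'[unfolded split_block_def Let_def] A'0 A'c n_def by auto
  have A0: "A0 \<in> carrier_mat m 1" unfolding A0id by auto
  from Suc.IH[OF A3] obtain C where C: "C \<in> carrier_mat m m" and utC: "upper_triangular C"
    and simC: "similar_mat A3 C" by auto
  from simC obtain P' Q' where simIH: "similar_mat_wit A3 C P' Q'" unfolding similar_mat_def by auto
  from similar_mat_witD2[OF A3 simIH] 
  have P': "P' \<in> carrier_mat m m" and Q': "Q' \<in> carrier_mat m m" 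
    and PQ': "P' * Q' = 1\<^sub>m m" and QP': "Q' * P' = 1\<^sub>m m" and A3eq: "A3 = P' * C * Q'" by auto
  let ?P' = "four_block_mat (1\<^sub>m 1) (0\<^sub>m 1 m) (0\<^sub>m m 1) P'"
  let ?Q' = "four_block_mat (1\<^sub>m 1) (0\<^sub>m 1 m) (0\<^sub>m m 1) Q'"
  let ?C = "four_block_mat A1 (A2 * P') A0 C"
  have A0_eq: "A0 = Q' * A0 * 1\<^sub>m 1" unfolding A0id using Q' by auto
  have A2_eq: "A2 = 1\<^sub>m 1 * (A2 * P') * Q'" using A2 P' Q' PQ'
    by (metis assoc_mult_mat left_mult_one_mat right_mult_one_mat mult_carrier_mat)
  have simA'C: "similar_mat_wit A' ?C ?P' ?Q'" unfolding A'block
    by (rule similar_mat_wit_four_block[OF similar_mat_wit_refl[OF A1] simIH A2_eq _ A1 A3 A0],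
    insert PQ' A2 P' Q' A0id, auto)
  have ut1: "upper_triangular A1" using A1 unfolding upper_triangular_def by auto
  have ut: "upper_triangular ?C" unfolding A0id
    by (intro upper_triangular_four_block[OF A1 C ut1 utC])
  have "?C \<in> carrier_mat n n" using A1 A2 P' C n_def A0 by auto
  with ut similar_mat_wit_trans[OF simAA' simA'C] show ?case unfolding n_def similar_mat_def by blast
qed

lemma jnf_exists:
  fixes A :: "'a::alg_closed_field mat"
  assumes "A \<in> carrier_mat n n"
  shows "\<exists>n_as. jordan_nf A n_as"
proof -
  from triangularizable[OF assms] obtain B where B: "B \<in> carrier_mat n n" "upper_triangular B"
    "similar_mat A B" by auto
  from triangular_to_jnf_vector[OF B(1,2)] have "jordan_nf B (triangular_to_jnf_vector B)" .
  with B(3) show ?thesis unfolding jordan_nf_def using similar_mat_trans by blast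
qed

lemma jnf_mset_unique:
  fixes A :: "'a::field mat"
  assumes "jordan_nf A n_as" "jordan_nf A m_bs"
  shows "mset n_as = mset m_bs"
proof (rule multiset_eqI)
  fix x :: "nat \<times> 'a"
  obtain k ev where x: "x = (k,ev)" by force
  show "count (mset n_as) x = count (mset m_bs) x"
  proof (cases "k = 0")
    case True
    have "x \<notin> set n_as" "x \<notin> set m_bs" using assms unfolding jordan_nf_def x True by force+
    thus ?thesis by (metis in_multiset_in_set not_in_iff)
  next
    case False
    from compute_nr_of_jordan_blocks[OF assms(1) False, of ev]
      compute_nr_of_jordan_blocks[OF assms(2) False, of ev]
    have "length (filter ((=) (k, ev)) n_as) = length (filter ((=) (k, ev)) m_bs)"
      using compute_nr_of_jordan_blocks[OF assms(1) False, of ev]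
        compute_nr_of_jordan_blocks[OF assms(2) False, of ev] by simp
    thus ?thesis unfolding x count_mset count_list_eq_length_filter by simp
  qed
qed

lemma sh_eq:
  fixes A :: "'a::field mat"
  assumes "jordan_nf A n_as"
  shows "sh A = mset (map fst n_as)"
  unfolding sh_def
proof (rule the_equality)
  show "\<exists>n_asa. jordan_nf A n_asa \<and> mset (map fst n_as) = mset (map fst n_asa)" using assms by auto
  fix M assume "\<exists>n_asa. jordan_nf A n_asa \<and> M = mset (map fst n_asa)"
  then obtain m where m: "jordan_nf A m" "M = mset (map fst m)" by auto
  from jnf_mset_unique[OF assms m(1)] have "mset n_as = mset m" .
  hence "image_mset fst (mset n_as) = image_mset fst (mset m)" by simp
  thus "M = mset (map fst n_as)" using m(2) by simp
qed

lemma four_block_zero_iff: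
  assumes "A \<in> carrier_mat r1 c1" "B \<in> carrier_mat r1 c2" "C \<in> carrier_mat r2 c1" "D \<in> carrier_mat r2 c2"
  shows "four_block_mat A B C D = 0\<^sub>m (r1+r2) (c1+c2) \<longleftrightarrow>
    A = 0\<^sub>m r1 c1 \<and> B = 0\<^sub>m r1 c2 \<and> C = 0\<^sub>m r2 c1 \<and> D = 0\<^sub>m r2 c2"
proof
  assume z: "four_block_mat A B C D = 0\<^sub>m (r1+r2) (c1+c2)"
  have e: "four_block_mat A B C D $$ (i,j) = 0" if "i < r1+r2" "j < c1+c2" for i j
    using z that by simp
  show "A = 0\<^sub>m r1 c1 \<and> B = 0\<^sub>m r1 c2 \<and> C = 0\<^sub>m r2 c1 \<and> D = 0\<^sub>m r2 c2"
  proof (intro conjI eq_matI)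
    fix i j
    assume "i < dim_row (0\<^sub>m r1 c1)" "j < dim_col (0\<^sub>m r1 c1)"
    thus "A $$ (i,j) = 0\<^sub>m r1 c1 $$ (i,j)" using e[of i j] assms by auto
  next
    fix i j
    assume "i < dim_row (0\<^sub>m r1 c2)" "j < dim_col (0\<^sub>m r1 c2)"
    thus "B $$ (i,j) = 0\<^sub>m r1 c2 $$ (i,j)" using e[of i "j + c1"] assms by auto
  next
    fix i j
    assume "i < dim_row (0\<^sub>m r2 c1)" "j < dim_col (0\<^sub>m r2 c1)"
    thus "C $$ (i,j) = 0\<^sub>m r2 c1 $$ (i,j)" using e[of "i + r1" j] assms by auto
  next
    fix i j
    assume "i < dim_row (0\<^sub>m r2 c2)" "j < dim_col (0\<^sub>m r2 c2)"
    thus "D $$ (i,j) = 0\<^sub>m r2 c2 $$ (i,j)" using e[of "i + r1" "j + c1"] assms by auto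
  qed (insert assms, auto)
next
  assume "A = 0\<^sub>m r1 c1 \<and> B = 0\<^sub>m r1 c2 \<and> C = 0\<^sub>m r2 c1 \<and> D = 0\<^sub>m r2 c2"
  thus "four_block_mat A B C D = 0\<^sub>m (r1+r2) (c1+c2)" by (intro eq_matI, auto)
qed

lemma diag_block_zero_iff:
  "diag_block_mat Bs = 0\<^sub>m (sum_list (map dim_row Bs)) (sum_list (map dim_col Bs)) \<longleftrightarrow>
   (\<forall>M\<in>set Bs. M = 0\<^sub>m (dim_row M) (dim_col M))"
proof (induction Bs)
  case Nil
  then show ?case by simp
next
  case (Cons M Bs)
  let ?D = "diag_block_mat Bs"
  have D: "?D \<in> carrier_mat (sum_list (map dim_row Bs)) (sum_list (map dim_col Bs))"
    by (simp add: carrier_matI dim_diag_block_mat)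
  have "diag_block_mat (M # Bs) = four_block_mat M (0\<^sub>m (dim_row M) (dim_col ?D)) (0\<^sub>m (dim_row ?D) (dim_col M)) ?D"
    by (simp add: Let_def)
  also have "\<dots> = 0\<^sub>m (dim_row M + sum_list (map dim_row Bs)) (dim_col M + sum_list (map dim_col Bs))
     \<longleftrightarrow> M = 0\<^sub>m (dim_row M) (dim_col M) \<and> ?D = 0\<^sub>m (sum_list (map dim_row Bs)) (sum_list (map dim_col Bs))"
    unfolding dim_diag_block_mat
    by (rule trans[OF four_block_zero_iff], insert D, auto simp: dim_diag_block_mat)
  finally show ?case using Cons by simp
qed

lemma sim_wit_zero:
  assumes "similar_mat_wit A B P Q" "A \<in> carrier_mat n n"
  shows "A = 0\<^sub>m n n \<longleftrightarrow> B = 0\<^sub>m n n"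
proof -
  from similar_mat_witD2[OF assms(2) assms(1)] have
    PQ: "P * Q = 1\<^sub>m n" "Q * P = 1\<^sub>m n" "A = P * B * Q" and
    c: "B \<in> carrier_mat n n" "P \<in> carrier_mat n n" "Q \<in> carrier_mat n n" by auto
  have "Q * A * P = (Q * P) * B * (Q * P)" using c PQ(3)
    by (simp add: assoc_mult_mat[of _ n n _ n _ n])
  hence B: "B = Q * A * P" using PQ c by simp
  show ?thesis
  proof
    assume "A = 0\<^sub>m n n" thus "B = 0\<^sub>m n n" using B c by simp
  next
    assume "B = 0\<^sub>m n n" thus "A = 0\<^sub>m n n" using PQ(3) c by simp
  qed
qed

lemma jb_pow_zero:
  assumes "0 < s"
  shows "jordan_block s (a::'a::field) ^\<^sub>m k = 0\<^sub>m s s \<longleftrightarrow> a = 0 \<and> s \<le> k"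
proof
  assume z: "jordan_block s a ^\<^sub>m k = 0\<^sub>m s s"
  have "(jordan_block s a ^\<^sub>m k) $$ (0,0) = a ^ k" unfolding jordan_block_pow using assms by simp
  hence a: "a = 0" using z assms by simp
  moreover have "s \<le> k"
  proof (rule ccontr)
    assume "\<not> s \<le> k"
    hence "(jordan_block s a ^\<^sub>m k) $$ (0,k) = 1" unfolding a jordan_block_zero_pow by simp
    thus False using z \<open>\<not> s \<le> k\<close> by simp
  qed
  ultimately show "a = 0 \<and> s \<le> k" by auto
next
  assume h: "a = 0 \<and> s \<le> k"
  hence a: "a = 0" by simp
  show "jordan_block s a ^\<^sub>m k = 0\<^sub>m s s" unfolding a jordan_block_zero_pow
    by (intro eq_matI, insert h, auto)
qed

lemma jnf_pow_zero:
  fixes A :: "'a::field mat"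
  assumes jnf: "jordan_nf A n_as" and A: "A \<in> carrier_mat n n"
  shows "A ^\<^sub>m k = 0\<^sub>m n n \<longleftrightarrow> (\<forall>(s,a)\<in>set n_as. a = 0 \<and> s \<le> k)"
proof -
  from jnf obtain P Q where wit: "similar_mat_wit A (jordan_matrix n_as) P Q"
    unfolding jordan_nf_def similar_mat_def by auto
  have nd: "n = sum_list (map fst n_as)"
    using similar_mat_witD2[OF A wit] jordan_matrix_carrier[of n_as] by auto
  have Ak: "A ^\<^sub>m k \<in> carrier_mat n n" using A by auto
  let ?L = "map (\<lambda>(n,a). (jordan_block n a) ^\<^sub>m k) n_as"
  have 1: "A ^\<^sub>m k = 0\<^sub>m n n \<longleftrightarrow> jordan_matrix n_as ^\<^sub>m k = 0\<^sub>m n n"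
    by (rule sim_wit_zero[OF similar_mat_wit_pow[OF wit] Ak])
  have 2: "jordan_matrix n_as ^\<^sub>m k = diag_block_mat ?L"
    by (rule jordan_matrix_pow)
  have r: "map dim_row ?L = map fst n_as"
    by (induct n_as, auto)
  have c: "map dim_col ?L = map fst n_as"
    by (induct n_as, auto)
  have 3: "diag_block_mat ?L = 0\<^sub>m n n \<longleftrightarrow> (\<forall>M\<in>set ?L. M = 0\<^sub>m (dim_row M) (dim_col M))"
    using diag_block_zero_iff[of ?L] unfolding r c nd[symmetric] .
  have pos: "\<And>s a. (s,a) \<in> set n_as \<Longrightarrow> 0 < s" using jnf unfolding jordan_nf_def by force
  have 4: "(\<forall>M\<in>set ?L. M = 0\<^sub>m (dim_row M) (dim_col M)) \<longleftrightarrow> (\<forall>(s,a)\<in>set n_as. a = 0 \<and> s \<le> k)"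
  proof -
    have e: "(case x of (s,a) \<Rightarrow> jordan_block s a ^\<^sub>m k = 0\<^sub>m (dim_row (jordan_block s a ^\<^sub>m k)) (dim_col (jordan_block s a ^\<^sub>m k)))
       \<longleftrightarrow> (case x of (s,a) \<Rightarrow> a = 0 \<and> s \<le> k)" if "x \<in> set n_as" for x
    proof -
      obtain s a where x: "x = (s,a)" by force
      show ?thesis using jb_pow_zero[OF pos[OF that[unfolded x]], of a k] unfolding x by (simp only: prod.case jordan_block_pow_dim)
    qed
    have "(\<forall>M\<in>set ?L. M = 0\<^sub>m (dim_row M) (dim_col M)) \<longleftrightarrow>
      (\<forall>x\<in>set n_as. case x of (s,a) \<Rightarrow> jordan_block s a ^\<^sub>m k = 0\<^sub>m (dim_row (jordan_block s a ^\<^sub>m k)) (dim_col (jordan_block s a ^\<^sub>m k)))"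
      by (simp add: case_prod_beta)
    also have "\<dots> \<longleftrightarrow> (\<forall>x\<in>set n_as. case x of (s,a) \<Rightarrow> a = 0 \<and> s \<le> k)"
      using e by (meson ball_cong)
    finally show ?thesis by simp
  qed
  show ?thesis using 1 2 3 4 by simp
qed


definition T :: "nat \<Rightarrow> 'a::comm_ring_1 poly \<Rightarrow> 'a mat" where
  "T l p = mat l l (\<lambda>(i,j). if i \<le> j then coeff p (j - i) else 0)"

lemma T_carrier[simp]: "T l p \<in> carrier_mat l l" and T_dim[simp]: "dim_row (T l p) = l" "dim_col (T l p) = l"
  unfolding T_def by auto

lemma T_index[simp]: "i < l \<Longrightarrow> j < l \<Longrightarrow> T l p $$ (i,j) = (if i \<le> j then coeff p (j - i) else 0)"
  unfolding T_def by auto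

lemma T_mult: "T l (p * q) = T l p * T l q"
proof (rule eq_matI)
  fix i j assume "i < dim_row (T l p * T l q)" "j < dim_col (T l p * T l q)"
  hence i: "i < l" and j: "j < l" by auto
  have "(T l p * T l q) $$ (i,j) = (\<Sum>m\<in>{0..<l}. (if i \<le> m then coeff p (m-i) else 0) * (if m \<le> j then coeff q (j-m) else 0))"
    using i j by (simp add: scalar_prod_def)
  also have "\<dots> = (if i \<le> j then coeff (p*q) (j - i) else 0)"
  proof (cases "i \<le> j")
    case True
    have "(\<Sum>m\<in>{0..<l}. (if i \<le> m then coeff p (m-i) else 0) * (if m \<le> j then coeff q (j-m) else 0))
       = (\<Sum>m\<in>{i..j}. (if i \<le> m then coeff p (m-i) else 0) * (if m \<le> j then coeff q (j-m) else 0))"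
      by (rule sum.mono_neutral_right, insert j, auto)
    also have "\<dots> = (\<Sum>m\<in>{i..j}. coeff p (m-i) * coeff q (j-m))" by (rule sum.cong, auto)
    also have "\<dots> = (\<Sum>r\<in>{0..j-i}. coeff p r * coeff q (j-i-r))"
    proof -
      have "{i..j} = {0+i..(j-i)+i}" using True by auto
      hence "(\<Sum>m\<in>{i..j}. coeff p (m-i) * coeff q (j-m)) = (\<Sum>r\<in>{0..j-i}. coeff p (r+i-i) * coeff q (j-(r+i)))"
        by (simp only: sum.shift_bounds_cl_nat_ivl)
      also have "\<dots> = (\<Sum>r\<in>{0..j-i}. coeff p r * coeff q (j-i-r))" by (rule sum.cong, auto simp: add.commute)
      finally show ?thesis .
    qed
    also have "\<dots> = coeff (p*q) (j-i)" by (simp add: coeff_mult atLeast0AtMost)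
    finally show ?thesis using True by simp
  next
    case False
    hence "\<And>m. (if i \<le> m then coeff p (m-i) else 0) * (if m \<le> j then coeff q (j-m) else 0) = 0" by auto
    thus ?thesis using False by simp
  qed
  finally show "T l (p * q) $$ (i, j) = (T l p * T l q) $$ (i, j)" using i j by simp
qed auto

lemma T_add: "T l (p + q) = T l p + T l q"
  by (rule eq_matI, auto)

lemma T_diff: "T l (p - q) = T l p - T l q"
  by (rule eq_matI, auto)

lemma T_one: "T l 1 = 1\<^sub>m l"
  by (rule eq_matI, auto simp: coeff_1)

lemma T_zero: "T l 0 = 0\<^sub>m l l"
  by (rule eq_matI, auto)

lemma T_eq_zero_iff: "T l p = 0\<^sub>m l l \<longleftrightarrow> monom 1 l dvd p"
proof
  assume z: "T l p = 0\<^sub>m l l"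
  show "monom 1 l dvd p" unfolding monom_1_dvd_iff'
  proof (intro allI impI)
    fix k assume "k < l"
    with arg_cong[OF z, of "\<lambda>M. M $$ (0,k)"] show "coeff p k = 0" by auto
  qed
next
  assume "monom 1 l dvd p"
  hence "\<forall>k<l. coeff p k = 0" unfolding monom_1_dvd_iff' .
  thus "T l p = 0\<^sub>m l l" by (intro eq_matI, auto)
qed

lemma XN_index:
  assumes X: "X \<in> carrier_mat l l" and i: "i < l" and j: "j < l"
  shows "(X * jordan_block l (0::'a::comm_ring_1)) $$ (i,j) = (if 0 < j then X $$ (i,j-1) else 0)"
proof -
  have "(X * jordan_block l 0) $$ (i,j) = (\<Sum>m\<in>{0..<l}. X $$ (i,m) * (if m = j then 0 else if Suc m = j then 1 else 0))"
    using X i j by (simp add: scalar_prod_def)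
  also have "\<dots> = (\<Sum>m\<in>{0..<l}. if m = j - 1 \<and> 0 < j then X $$ (i,m) else 0)"
    by (rule sum.cong, auto)
  also have "\<dots> = (if 0 < j then X $$ (i,j-1) else 0)"
    using j by (cases "0 < j", simp_all add: sum.delta')
  finally show ?thesis .
qed

lemma NX_index:
  assumes X: "X \<in> carrier_mat l l" and i: "i < l" and j: "j < l"
  shows "(jordan_block l (0::'a::comm_ring_1) * X) $$ (i,j) = (if Suc i < l then X $$ (Suc i,j) else 0)"
proof -
  have "(jordan_block l 0 * X) $$ (i,j) = (\<Sum>m\<in>{0..<l}. (if i = m then 0 else if Suc i = m then 1 else 0) * X $$ (m,j))"
    using X i j by (simp add: scalar_prod_def)
  also have "\<dots> = (\<Sum>m\<in>{0..<l}. if m = Suc i then X $$ (m,j) else 0)"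
    by (rule sum.cong, auto)
  also have "\<dots> = (if Suc i < l then X $$ (Suc i,j) else 0)"
    by (simp add: sum.delta')
  finally show ?thesis .
qed

lemma comm_T:
  fixes X :: "'a::comm_ring_1 mat"
  assumes X: "X \<in> carrier_mat l l" and comm: "X * jordan_block l 0 = jordan_block l 0 * X"
  shows "X = T l (\<Sum>k<l. monom (X $$ (0,k)) k)"
proof -
  have R: "(if 0 < j then X $$ (i,j-1) else 0) = (if Suc i < l then X $$ (Suc i,j) else 0)"
    if "i < l" "j < l" for i j
    using arg_cong[OF comm, of "\<lambda>M. M $$ (i,j)"] XN_index[OF X that] NX_index[OF X that] by simp
  have E: "j < l \<Longrightarrow> X $$ (i,j) = (if i \<le> j then X $$ (0,j-i) else 0)" if "i < l" for i j
    using that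
  proof (induction i arbitrary: j)
    case 0
    then show ?case by simp
  next
    case (Suc i j)
    have Ri: "(if 0 < j then X $$ (i,j-1) else 0) = X $$ (Suc i,j)" using R[of i j] Suc.prems by auto
    show ?case
    proof (cases "j = 0")
      case True
      then show ?thesis using Ri by simp
    next
      case False
      hence "X $$ (Suc i, j) = X $$ (i, j-1)" using Ri by simp
      also have "\<dots> = (if i \<le> j - 1 then X $$ (0, j - 1 - i) else 0)" using Suc.IH[of "j-1"] Suc.prems by auto
      also have "\<dots> = (if Suc i \<le> j then X $$ (0, j - Suc i) else 0)" using False by auto
      finally show ?thesis .
    qed
  qed
  have C: "coeff (\<Sum>k<l. monom (X $$ (0,k)) k) m = (if m < l then X $$ (0,m) else 0)" for m
    by (simp add: coeff_sum coeff_monom)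
  show ?thesis
  proof (rule eq_matI)
    fix i j assume ij: "i < dim_row (T l (\<Sum>k<l. monom (X $$ (0, k)) k))" "j < dim_col (T l (\<Sum>k<l. monom (X $$ (0, k)) k))"
    hence i: "i < l" and j: "j < l" by auto
    show "X $$ (i, j) = T l (\<Sum>k<l. monom (X $$ (0, k)) k) $$ (i, j)"
      unfolding T_index[OF i j] C E[OF i j] using j by auto
  qed (insert X, auto)
qed


type_synonym 'a quad = "'a \<times> 'a \<times> 'a \<times> 'a"

fun qmul :: "'a::comm_ring_1 quad \<Rightarrow> 'a quad \<Rightarrow> 'a quad" where
  "qmul (a,b,c,d) (e,f,g,h) = (a*e+b*g, a*f+b*h, c*e+d*g, c*f+d*h)"

definition qone :: "'a::comm_ring_1 quad" where "qone = (1,0,0,1)"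

fun qpow :: "nat \<Rightarrow> 'a::comm_ring_1 quad \<Rightarrow> 'a quad" where
  "qpow 0 P = qone"
| "qpow (Suc k) P = qmul (qpow k P) P"

fun qdet :: "'a::comm_ring_1 quad \<Rightarrow> 'a" where
  "qdet (a,b,c,d) = a*d - b*c"

fun qtr :: "'a::comm_ring_1 quad \<Rightarrow> 'a" where
  "qtr (a,b,c,d) = a + d"

fun qsc :: "'a::comm_ring_1 \<Rightarrow> 'a quad \<Rightarrow> 'a quad" where
  "qsc s (a,b,c,d) = (s*a, s*b, s*c, s*d)"

fun qsub :: "'a::comm_ring_1 quad \<Rightarrow> 'a quad \<Rightarrow> 'a quad" where
  "qsub (a,b,c,d) (e,f,g,h) = (a-e, b-f, c-g, d-h)"

lemma qmul_assoc: "qmul (qmul P Q) R = qmul P (qmul Q R)"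
  by (cases P; cases Q; cases R; simp add: algebra_simps)

lemma qmul_one[simp]: "qmul qone P = P" "qmul P qone = P"
  by (cases P; simp add: qone_def)+

lemma qpow_Suc_left: "qpow (Suc k) P = qmul P (qpow k P)"
proof (induction k)
  case (Suc k)
  have "qpow (Suc (Suc k)) P = qmul (qmul P (qpow k P)) P" using Suc by simp
  also have "\<dots> = qmul P (qpow (Suc k) P)" by (simp add: qmul_assoc)
  finally show ?case .
qed simp

lemma qpow_SS: "qpow (Suc (Suc k)) P = qmul (qmul P P) (qpow k P)"
  by (simp only: qpow_Suc_left qmul_assoc)

lemma quad_CH: "qmul (qmul P P) Q = qsub (qsc (qtr P) (qmul P Q)) (qsc (qdet P) Q)"
  by (cases P; cases Q; simp add: algebra_simps)

lemma qdet_mul: "qdet (qmul P Q) = qdet P * qdet Q"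
  by (cases P; cases Q; simp add: algebra_simps)

lemma qdet_pow: "qdet (qpow k P) = qdet P ^ k"
  by (induction k, simp add: qone_def, simp add: qdet_mul)

fun qev :: "'a::comm_ring_1 poly quad \<Rightarrow> 'a quad" where
  "qev (a,b,c,d) = (poly a 0, poly b 0, poly c 0, poly d 0)"

lemma qev_mul: "qev (qmul P Q) = qmul (qev P) (qev Q)"
  by (cases P; cases Q; simp)

lemma qev_pow: "qev (qpow k P) = qpow k (qev P)"
  by (induction k, simp add: qone_def, simp add: qev_mul)

lemma qev_det: "qdet (qev P) = poly (qdet P) 0" and qev_tr: "qtr (qev P) = poly (qtr P) 0"
  by (cases P; simp)+

fun qdvd :: "'a::comm_ring_1 \<Rightarrow> 'a quad \<Rightarrow> bool" where
  "qdvd x (a,b,c,d) = (x dvd a \<and> x dvd b \<and> x dvd c \<and> x dvd d)"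

lemma qdvd_sub: "qdvd x P \<Longrightarrow> qdvd x Q \<Longrightarrow> qdvd x (qsub P Q)"
  by (cases P; cases Q; auto)

lemma qdvd_sc: "y dvd s \<Longrightarrow> qdvd x P \<Longrightarrow> qdvd (y * x) (qsc s P)"
  by (cases P; auto intro: mult_dvd_mono)

lemma qdvd_mul_left: "qdvd x Q \<Longrightarrow> qdvd x (qmul P Q)"
  by (cases P; cases Q; auto)

lemma qdvd_one[simp]: "qdvd 1 P" by (cases P, auto)

lemma quad_nilp_tr:
  fixes P :: "'a::field quad"
  assumes "qpow m P = (0,0,0,0)" and "qdet P = 0"
  shows "qtr P = 0"
proof (rule ccontr)
  assume t: "qtr P \<noteq> 0"
  have pw: "qpow (Suc k) P = qsc (qtr P ^ k) P" for k
  proof (induction k)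
    case 0 thus ?case by (cases P, simp add: qone_def)
  next
    case (Suc k)
    have "qpow (Suc (Suc k)) P = qmul (qmul P P) (qpow k P)" by (rule qpow_SS)
    also have "\<dots> = qsc (qtr P) (qmul P (qpow k P))" using assms(2) quad_CH[of P "qpow k P"]
      by (cases P; cases "qpow k P"; simp)
    also have "qmul P (qpow k P) = qsc (qtr P ^ k) P" using Suc qpow_Suc_left[of k P] by simp
    finally show ?case by (cases P, simp add: algebra_simps)
  qed
  have "m \<noteq> 0" using assms(1) by (cases m) (auto simp: qone_def)
  then obtain k where m: "m = Suc k" by (cases m, auto)
  from assms(1) pw[of k] have "qsc (qtr P ^ k) P = (0,0,0,0)" unfolding m by simp
  hence "P = (0,0,0,0)" using t by (cases P, auto)
  thus False using t by simp
qed


lemma order_pow: "(p::'a::idom poly) \<noteq> 0 \<Longrightarrow> Polynomial.order a (p ^ n) = n * Polynomial.order a p"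
proof (induction n)
  case (Suc n)
  have "p * p ^ n \<noteq> 0" using Suc.prems by simp
  from order_mult[OF this] Suc show ?case by simp
qed simp

lemma monom_dvd_monom: "a \<le> b \<Longrightarrow> monom (1::'a::comm_ring_1) a dvd monom 1 b"
proof -
  assume "a \<le> b"
  hence "monom (1::'a) b = monom 1 a * monom 1 (b - a)" by (simp add: mult_monom)
  thus ?thesis by simp
qed

lemma qdvd_mono: "x dvd y \<Longrightarrow> qdvd y P \<Longrightarrow> qdvd x P"
  by (cases P, auto intro: dvd_trans)

lemma monom1_poly0: "monom 1 1 dvd p \<Longrightarrow> poly p 0 = 0"
  using monom_1_dvd_iff'[of 1 p] by (simp add: poly_0_coeff_0)

lemma monom1_poly0': "poly p 0 = 0 \<Longrightarrow> monom 1 1 dvd p"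
  using monom_1_dvd_iff'[of 1 p] by (simp add: poly_0_coeff_0)

lemma qdvd_qev: "qdvd (monom 1 1) P \<Longrightarrow> qev P = (0,0,0,0)"
  by (cases P, auto simp: monom1_poly0)

lemma core_poly:
  fixes P :: "'a::field poly quad"
  assumes l: "0 < l" and nil: "qdvd (monom 1 l) (qpow m P)"
  shows "qdvd (monom 1 l) (qpow (l+1) P) \<or> \<not> qdvd (monom 1 l) (qpow (2*l-1) P)"
proof (cases "monom 1 2 dvd qdet P")
  case True
  let ?x = "monom (1::'a) 1"
  have xd: "?x dvd qdet P" by (rule dvd_trans[OF monom_dvd_monom True], simp)
  have "qdvd ?x (qpow m P)" by (rule qdvd_mono[OF monom_dvd_monom nil], insert l, simp)
  hence "qev (qpow m P) = (0,0,0,0)" by (rule qdvd_qev)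
  hence z: "qpow m (qev P) = (0,0,0,0)" by (simp add: qev_pow)
  have "qdet (qev P) = 0" unfolding qev_det using monom1_poly0[OF xd] .
  from quad_nilp_tr[OF z this] have "poly (qtr P) 0 = 0" unfolding qev_tr .
  hence xt: "?x dvd qtr P" by (rule monom1_poly0')
  have step: "qdvd (monom 1 k) (qpow (k+1) P) \<and> qdvd (monom 1 (k+1)) (qpow (k+2) P)" for k
  proof (induction k)
    case 0
    have e: "qpow (0+2) P = qsub (qsc (qtr P) (qmul P qone)) (qsc (qdet P) qone)"
      using quad_CH[of P qone] qpow_SS[of 0 P] by (simp only: numeral_2_eq_2 add_0 qpow.simps(1))
    moreover have "qdvd ?x (qsub (qsc (qtr P) (qmul P qone)) (qsc (qdet P) qone))"
    proof (rule qdvd_sub)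
      show "qdvd ?x (qsc (qtr P) (qmul P qone))" using qdvd_sc[OF xt qdvd_one] by simp
      show "qdvd ?x (qsc (qdet P) qone)" using qdvd_sc[OF xd qdvd_one] by simp
    qed
    hence "qdvd (monom 1 (0+1)) (qpow (0+2) P)" unfolding e by simp
    moreover have "qdvd (monom 1 0) (qpow (0+1) P)" by simp
    ultimately show ?case by blast
  next
    case (Suc k)
    have "qpow (Suc k + 2) P = qmul (qmul P P) (qpow (k+1) P)"
      using qpow_SS[of "k+1" P] by simp
    also have "\<dots> = qsub (qsc (qtr P) (qpow (k+2) P)) (qsc (qdet P) (qpow (k+1) P))"
      using quad_CH[of P "qpow (k+1) P"] qpow_Suc_left[of "k+1" P] by simp
    finally have eq: "qpow (Suc k + 2) P = \<dots>" .
    have m1: "?x * monom 1 (k+1) = monom 1 (Suc k + 1)" by (simp add: mult_monom)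
    have m2: "monom (1::'a) 2 * monom 1 k = monom 1 (Suc k + 1)" by (simp add: mult_monom)
    have "qdvd (monom 1 (Suc k + 1)) (qpow (Suc k + 2) P)"
      unfolding eq
    proof (rule qdvd_sub)
      show "qdvd (monom 1 (Suc k + 1)) (qsc (qtr P) (qpow (k + 2) P))"
        using qdvd_sc[OF xt, of "monom 1 (k+1)" "qpow (k + 2) P"] Suc.IH unfolding m1 by simp
      show "qdvd (monom 1 (Suc k + 1)) (qsc (qdet P) (qpow (k + 1) P))"
        using qdvd_sc[OF True, of "monom 1 k" "qpow (k + 1) P"] Suc.IH unfolding m2 by simp
    qed
    thus ?case using Suc.IH by simp
  qed
  show ?thesis using step[of l] by simp
next
  case False
  have d0: "qdet P \<noteq> 0" using False by auto
  have ord: "Polynomial.order 0 (qdet P) \<le> 1" using False monom_1_dvd_iff[OF d0, of 2] by simp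
  have "\<not> qdvd (monom 1 l) (qpow (2*l-1) P)"
  proof
    assume q: "qdvd (monom 1 l) (qpow (2*l-1) P)"
    obtain a b c d where Q: "qpow (2*l-1) P = (a,b,c,d)" by (cases "qpow (2*l-1) P", auto)
    from q have dv: "monom 1 l dvd a" "monom 1 l dvd b" "monom 1 l dvd c" "monom 1 l dvd d" unfolding Q by auto
    have mm: "monom (1::'a) l * monom 1 l = monom 1 (2*l)" by (simp add: mult_monom mult_2)
    have "monom 1 (2*l) dvd a * d" using mult_dvd_mono[OF dv(1) dv(4)] unfolding mm .
    moreover have "monom 1 (2*l) dvd b * c" using mult_dvd_mono[OF dv(2) dv(3)] unfolding mm .
    ultimately have "monom 1 (2*l) dvd a * d - b * c" by (rule dvd_diff)
    hence "monom 1 (2*l) dvd qdet P ^ (2*l-1)" using qdet_pow[of "2*l-1" P] Q by simp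
    moreover have "qdet P ^ (2*l-1) \<noteq> 0" using d0 by simp
    ultimately have "2*l \<le> Polynomial.order 0 (qdet P ^ (2*l-1))" using monom_1_dvd_iff by blast
    also have "\<dots> = (2*l-1) * Polynomial.order 0 (qdet P)" by (rule order_pow[OF d0])
    also have "\<dots> \<le> 2*l-1" using ord by simp
    finally show False using l by simp
  qed
  thus ?thesis by simp
qed


fun psi :: "nat \<Rightarrow> 'a::comm_ring_1 poly quad \<Rightarrow> 'a mat" where
  "psi l (a,b,c,d) = four_block_mat (T l a) (T l b) (T l c) (T l d)"

lemma psi_carrier[simp]: "psi l P \<in> carrier_mat (l+l) (l+l)"
  by (cases P, auto)

lemma psi_dim[simp]: "dim_row (psi l P) = l + l" "dim_col (psi l P) = l + l"
  using psi_carrier[of l P] unfolding carrier_mat_def by blast+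

lemma psi_mult: "psi l (qmul P Q) = psi l P * psi l Q"
proof -
  obtain a b c d where P: "P = (a,b,c,d)" by (cases P, auto)
  obtain e f g h where Q: "Q = (e,f,g,h)" by (cases Q, auto)
  show ?thesis unfolding P Q
    by (simp add: mult_four_block_mat[OF T_carrier T_carrier T_carrier T_carrier T_carrier T_carrier T_carrier T_carrier] T_mult T_add)
qed

lemma psi_one: "psi l qone = 1\<^sub>m (l+l)"
  by (simp add: qone_def T_one T_zero)

lemma psi_pow: "psi l (qpow k P) = psi l P ^\<^sub>m k"
proof (induction k)
  case 0
  then show ?case by (simp add: psi_one)
next
  case (Suc k)
  then show ?case by (simp add: psi_mult)
qed

lemma psi_zero_iff: "psi l P = 0\<^sub>m (l+l) (l+l) \<longleftrightarrow> qdvd (monom 1 l) P"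
proof -
  obtain a b c d where P: "P = (a,b,c,d)" by (cases P, auto)
  show ?thesis unfolding P
    by (simp add: four_block_zero_iff[of _ l l] T_eq_zero_iff)
qed

lemma four_block_eq_iff:
  assumes "A \<in> carrier_mat r1 c1" "B \<in> carrier_mat r1 c2" "C \<in> carrier_mat r2 c1" "D \<in> carrier_mat r2 c2"
   "A' \<in> carrier_mat r1 c1" "B' \<in> carrier_mat r1 c2" "C' \<in> carrier_mat r2 c1" "D' \<in> carrier_mat r2 c2"
  shows "four_block_mat A B C D = four_block_mat A' B' C' D' \<longleftrightarrow>
    A = A' \<and> B = B' \<and> C = C' \<and> D = D'"
proof
  assume z: "four_block_mat A B C D = four_block_mat A' B' C' D'"
  have e: "four_block_mat A B C D $$ (i,j) = four_block_mat A' B' C' D' $$ (i,j)" for i j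
    using z by simp
  show "A = A' \<and> B = B' \<and> C = C' \<and> D = D'"
  proof (intro conjI eq_matI)
    fix i j
    assume "i < dim_row A'" "j < dim_col A'"
    thus "A $$ (i,j) = A' $$ (i,j)" using e[of i j] assms by auto
  next
    fix i j
    assume "i < dim_row B'" "j < dim_col B'"
    thus "B $$ (i,j) = B' $$ (i,j)" using e[of i "j + c1"] assms by auto
  next
    fix i j
    assume "i < dim_row C'" "j < dim_col C'"
    thus "C $$ (i,j) = C' $$ (i,j)" using e[of "i + r1" j] assms by auto
  next
    fix i j
    assume "i < dim_row D'" "j < dim_col D'"
    thus "D $$ (i,j) = D' $$ (i,j)" using e[of "i + r1" "j + c1"] assms by auto
  qed (insert assms, auto)
qed auto

lemma J_eq: "jordan_matrix [(l,0::'a::comm_ring_1),(l,0)] =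
   four_block_mat (jordan_block l 0) (0\<^sub>m l l) (0\<^sub>m l l) (jordan_block l 0)"
proof -
  have "four_block_mat (jordan_block l (0::'a)) (0\<^sub>m l 0) (0\<^sub>m 0 l) (0\<^sub>m 0 0) = jordan_block l 0"
    by (rule eq_matI, auto)
  thus ?thesis unfolding jordan_matrix_Cons by (simp add: jordan_matrix_def)
qed

lemma commutant_psi:
  fixes A :: "'a::comm_ring_1 mat"
  assumes A: "A \<in> carrier_mat (l+l) (l+l)"
    and comm: "A * jordan_matrix [(l,0),(l,0)] = jordan_matrix [(l,0),(l,0)] * A"
  shows "\<exists>P. A = psi l P"
proof -
  let ?N = "jordan_block l (0::'a)"
  obtain a b c d where sp: "split_block A l l = (a,b,c,d)" by (cases "split_block A l l", auto)
  from split_block[OF sp, of l l] A have a: "a \<in> carrier_mat l l" and b: "b \<in> carrier_mat l l"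
    and c: "c \<in> carrier_mat l l" and d: "d \<in> carrier_mat l l" and Ae: "A = four_block_mat a b c d" by auto
  have N: "?N \<in> carrier_mat l l" by simp
  have z: "0\<^sub>m l l \<in> carrier_mat l l" by simp
  have c1: "?N * a \<in> carrier_mat l l" "?N * b \<in> carrier_mat l l" "?N * c \<in> carrier_mat l l" "?N * d \<in> carrier_mat l l"
    "a * ?N \<in> carrier_mat l l" "b * ?N \<in> carrier_mat l l" "c * ?N \<in> carrier_mat l l" "d * ?N \<in> carrier_mat l l"
    using a b c d N by auto
  have "A * jordan_matrix [(l,0),(l,0)] = four_block_mat (a * ?N) (b * ?N) (c * ?N) (d * ?N)"
    unfolding J_eq Ae
    by (subst mult_four_block_mat[OF a b c d N z z N], insert a b c d c1, simp)
  moreover have "jordan_matrix [(l,0),(l,0)] * A = four_block_mat (?N * a) (?N * b) (?N * c) (?N * d)"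
    unfolding J_eq Ae
    by (subst mult_four_block_mat[OF N z z N a b c d], insert a b c d c1, simp)
  ultimately have "four_block_mat (a * ?N) (b * ?N) (c * ?N) (d * ?N) = four_block_mat (?N * a) (?N * b) (?N * c) (?N * d)"
    using comm by simp
  hence cm: "a * ?N = ?N * a" "b * ?N = ?N * b" "c * ?N = ?N * c" "d * ?N = ?N * d"
    using four_block_eq_iff[OF c1(5-8) c1(1-4)] by auto
  show ?thesis
    using comm_T[OF a cm(1)] comm_T[OF b cm(2)] comm_T[OF c cm(3)] comm_T[OF d cm(4)] Ae
    by (metis psi.simps)
qed


lemma jnf_dim:
  assumes jnf: "jordan_nf A n_as" and A: "A \<in> carrier_mat n n"
  shows "sum_list (map fst n_as) = n"
proof -
  from jnf obtain P Q where wit: "similar_mat_wit A (jordan_matrix n_as) P Q"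
    unfolding jordan_nf_def similar_mat_def by auto
  show ?thesis using similar_mat_witD2[OF A wit] jordan_matrix_carrier[of n_as] by auto
qed

lemma single_block:
  fixes xs :: "nat list"
  assumes "sum_list xs = n" "x \<in> set xs" "n \<le> x" "\<forall>y\<in>set xs. 0 < y"
  shows "mset xs = {#n#}"
proof -
  have s: "sum_list xs = x + sum_list (remove1 x xs)"
    using assms(2) by (induction xs, auto)
  hence "sum_list (remove1 x xs) = 0" and x: "x = n" using assms by auto
  hence "\<forall>y\<in>set (remove1 x xs). y = 0" by (simp add: sum_list_eq_0_iff)
  moreover have "\<forall>y\<in>set (remove1 x xs). 0 < y" using assms(4) by (meson notin_set_remove1)
  ultimately have "remove1 x xs = []" by (cases "remove1 x xs", auto)
  hence "mset xs - {#x#} = {#}" by (metis mset.simps(1) mset_remove1)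
  hence "mset xs = {#x#}" using insert_DiffM[of x "mset xs"] assms(2) by simp
  thus ?thesis using x by simp
qed

theorem main:
  fixes B :: "'a :: {alg_closed_field, field_char_0} mat"
    and n lam :: nat and mu :: "nat multiset"
  assumes "nilpotent_mat B n"
    and "sh B = {#lam, lam#}"
    and "n = 2 * lam"
    and "mu \<in> partitions_of_nil_comm B n"
  shows "mu = {#n#} \<or> Max_mset mu \<le> lam + 1"
proof -
  from assms(1) obtain kB where Bc: "B \<in> carrier_mat n n" and Bk: "B ^\<^sub>m kB = 0\<^sub>m n n"
    unfolding nilpotent_mat_def by auto
  from assms(4) obtain A where mu: "mu = sh A" and Ac: "A \<in> carrier_mat n n" and
    Am: "\<exists>k. A ^\<^sub>m k = 0\<^sub>m n n" and AB: "A * B = B * A"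
    unfolding partitions_of_nil_comm_def nil_comm_def nilpotent_mat_def by auto
  from Am obtain kA where Ak: "A ^\<^sub>m kA = 0\<^sub>m n n" by auto
  from jnf_exists[OF Bc] obtain n_as where jB: "jordan_nf B n_as" by auto
  from sh_eq[OF jB] assms(2) have ms: "mset (map fst n_as) = {#lam, lam#}" by simp
  hence "size (mset (map fst n_as)) = 2" by simp
  hence len: "length n_as = 2" by simp
  have fsts: "\<forall>x\<in>set n_as. fst x = lam"
  proof
    fix x assume "x \<in> set n_as"
    hence "fst x \<in># mset (map fst n_as)" by simp
    thus "fst x = lam" unfolding ms by auto
  qed
  from jnf_pow_zero[OF jB Bc, of kB] Bk have ev0: "\<forall>x\<in>set n_as. snd x = 0" by auto
  have nas: "n_as = [(lam,0),(lam,0)]"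
  proof -
    have "\<exists>x y. n_as = [x,y]" using len by (auto simp: numeral_2_eq_2 length_Suc_conv)
    then obtain x y where xy: "n_as = [x,y]" by auto
    show ?thesis using fsts ev0 unfolding xy by (cases x, cases y, auto)
  qed
  have lam0: "0 < lam" using jB unfolding nas jordan_nf_def by auto
  have nl: "n = lam + lam" using assms(3) by simp
  let ?J = "jordan_matrix [(lam,0::'a),(lam,0)]"
  from jB obtain P Q where wit: "similar_mat_wit B ?J P Q"
    unfolding nas jordan_nf_def similar_mat_def by auto
  from similar_mat_witD2[OF Bc wit] have PQ: "P * Q = 1\<^sub>m n" and QP: "Q * P = 1\<^sub>m n"
    and Beq: "B = P * ?J * Q" and Jc: "?J \<in> carrier_mat n n" and Pc: "P \<in> carrier_mat n n"
    and Qc: "Q \<in> carrier_mat n n" by auto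
  have Jeq: "?J = Q * B * P"
  proof -
    have "Q * B * P = (Q * P) * ?J * (Q * P)" unfolding Beq using Pc Qc Jc
      by (simp add: assoc_mult_mat[of _ n n _ n _ n])
    thus ?thesis using QP Jc by (simp add: left_mult_one_mat right_mult_one_mat)
  qed
  define A' where "A' = Q * A * P"
  have A'c: "A' \<in> carrier_mat n n" unfolding A'_def using Qc Ac Pc by auto
  have wit': "similar_mat_wit A' A Q P"
    by (rule similar_mat_witI[of _ _ n], insert PQ QP A'c Ac Pc Qc, auto simp: A'_def)
  have powz: "A ^\<^sub>m k = 0\<^sub>m n n \<longleftrightarrow> A' ^\<^sub>m k = 0\<^sub>m n n" for k
    using sim_wit_zero[OF similar_mat_wit_pow[OF wit', of k]] A'c by auto
  have comm: "A' * ?J = ?J * A'"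
  proof -
    have "A' * ?J = Q * (A * (P * Q) * B) * P" unfolding A'_def Jeq using Pc Qc Ac Bc
      by (simp add: assoc_mult_mat[of _ n n _ n _ n])
    also have "\<dots> = Q * (A * B) * P" using PQ Ac Bc by simp
    also have "\<dots> = Q * (B * A) * P" using AB by simp
    also have "\<dots> = Q * (B * (P * Q) * A) * P" using PQ Ac Bc by simp
    also have "\<dots> = ?J * A'" unfolding A'_def Jeq using Pc Qc Ac Bc
      by (simp add: assoc_mult_mat[of _ n n _ n _ n])
    finally show ?thesis .
  qed
  from commutant_psi[OF A'c[unfolded nl] comm] obtain R where A'eq: "A' = psi lam R" by auto
  have pz: "A ^\<^sub>m k = 0\<^sub>m n n \<longleftrightarrow> qdvd (monom 1 lam) (qpow k R)" for k
  proof -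
    have "A ^\<^sub>m k = 0\<^sub>m n n \<longleftrightarrow> psi lam R ^\<^sub>m k = 0\<^sub>m n n" using powz[of k] A'eq by simp
    also have "\<dots> \<longleftrightarrow> psi lam (qpow k R) = 0\<^sub>m (lam+lam) (lam+lam)" unfolding psi_pow nl ..
    finally show ?thesis unfolding psi_zero_iff .
  qed
  from core_poly[OF lam0 pz[of kA, THEN iffD1, OF Ak]]
  have dich: "A ^\<^sub>m (lam+1) = 0\<^sub>m n n \<or> A ^\<^sub>m (2*lam-1) \<noteq> 0\<^sub>m n n" unfolding pz .
  from jnf_exists[OF Ac] obtain m_as where jA: "jordan_nf A m_as" by auto
  have mu': "mu = mset (map fst m_as)" using sh_eq[OF jA] mu by simp
  have sumA: "sum_list (map fst m_as) = n" by (rule jnf_dim[OF jA Ac])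
  have posA: "\<forall>y\<in>set (map fst m_as). 0 < y" using jA unfolding jordan_nf_def by force
  from jnf_pow_zero[OF jA Ac, of kA] Ak have evA: "\<forall>x\<in>set m_as. snd x = 0" by auto
  from dich show ?thesis
  proof
    assume z: "A ^\<^sub>m (lam+1) = 0\<^sub>m n n"
    from jnf_pow_zero[OF jA Ac, of "lam+1"] z have le: "\<forall>x\<in>set m_as. fst x \<le> lam + 1" by auto
    have ne: "m_as \<noteq> []" using sumA nl lam0 by auto
    have "Max_mset mu \<le> lam + 1" unfolding mu' using le ne
      by (intro Max.boundedI, auto)
    thus ?thesis by simp
  next
    assume nz: "A ^\<^sub>m (2*lam-1) \<noteq> 0\<^sub>m n n"
    have "\<not> (\<forall>(s,a)\<in>set m_as. a = 0 \<and> s \<le> 2*lam-1)" using jnf_pow_zero[OF jA Ac, of "2*lam-1"] nz by simp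
    then obtain s a where sa: "(s,a) \<in> set m_as" "\<not> (a = 0 \<and> s \<le> 2*lam-1)" by auto
    with evA have "\<not> s \<le> 2*lam-1" by force
    hence x: "(s,a) \<in> set m_as" "\<not> fst (s,a) \<le> 2*lam-1" using sa by auto
    have "mset (map fst m_as) = {#n#}"
      by (rule single_block[OF sumA _ _ posA, of "fst (s,a)"], insert x assms(3), force+)
    thus ?thesis unfolding mu' by simp
  qed
qed


theorem proposition3p9:
  fixes B :: "'a :: {alg_closed_field, field_char_0} mat"
    and n lam :: nat and mu :: "nat multiset"
  assumes "nilpotent_mat B n"
    and "sh B = {#lam, lam#}"
    and "n = 2 * lam"
    and "mu \<in> partitions_of_nil_comm B n"
  shows "mu = {#n#} \<or> Max_mset mu \<le> lam + 1"
  using main[OF assms] .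

end
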